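(* For $n>2$, there is no non-trivial antisymmetric real bilinear map $b:\mathbb{C}^{n+1}\times\mathbb{C}^{n+1}\to\mathbb{C}^{n+1}$ that is equivariant under ${\sf SO}(1,n)$, i.e. satisfies $b(Au,Av)=Ab(u,v)$ for all $A\in{\sf SO}(1,n)$.
   Context: ${\sf SO}(1,n)$ is the special orthogonal group of the Lorentz form $-x_0^2+x_1^2+\dots+x_n^2$ on $\mathbb{R}^{n+1}$, acting on $\mathbb{C}^{n+1}=\mathbb{R}^{n+1}+i\mathbb{R}^{n+1}$ diagonally by $A(x+iy)=Ax+iAy$. *)

theory Defs
  imports "HOL-Analysis.Analysis"
begin

text \<open>Coordinates of R^(n+1) are indexed by a finite type 'n with CARD('n) = n+1;
  the distinguished index t0 plays the role of the time coordinate x_0.\<close>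

definition lorentz_form :: "'n::finite \<Rightarrow> real^'n^'n" where
  "lorentz_form t0 = (\<chi> i j. if i = j then (if i = t0 then -1 else 1) else 0)"

definition SO1n :: "'n::finite \<Rightarrow> (real^'n^'n) set" where
  "SO1n t0 = {A. transpose A ** lorentz_form t0 ** A = lorentz_form t0 \<and> det A = 1}"

text \<open>Diagonal action on C^(n+1) = R^(n+1) + i R^(n+1): A(x+iy) = Ax + iAy.\<close>
definition cact :: "real^'n^'n \<Rightarrow> complex^'n \<Rightarrow> complex^'n" where
  "cact A z = (\<chi> i. Complex ((A *v (\<chi> j. Re (z$j)))$i) ((A *v (\<chi> j. Im (z$j)))$i))"

end

theory Submission
  imports Defs
begin

definition sgnv :: "'n set \<Rightarrow> 'n \<Rightarrow> real" where
  "sgnv S i = (if i \<in> S then -1 else 1)"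

definition Dm :: "'n::finite set \<Rightarrow> real^'n^'n" where
  "Dm S = (\<chi> i j. if i = j then sgnv S i else 0)"

lemma sgnv_sq: "sgnv S i * sgnv S i = 1"
  by (simp add: sgnv_def)

lemma Dm_SO:
  fixes t m t0 :: "'n::finite"
  assumes "t \<noteq> m"
  shows "Dm {t,m} \<in> SO1n t0"
proof -
  have 1: "transpose (Dm {t,m}) ** lorentz_form t0 ** Dm {t,m} = lorentz_form t0"
  proof -
    have "(transpose (Dm {t,m}) ** lorentz_form t0 ** Dm {t,m}) $ i $ j = lorentz_form t0 $ i $ j" for i j
    proof -
      have a: "(transpose (Dm {t,m}) ** lorentz_form t0) $ i $ k = sgnv {t,m} i * lorentz_form t0 $ i $ k" for k
        by (simp add: matrix_matrix_mult_def transpose_def Dm_def if_distrib[where f="\<lambda>a. a * _"] cong: if_cong)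
      have "(transpose (Dm {t,m}) ** lorentz_form t0 ** Dm {t,m}) $ i $ j
          = sgnv {t,m} i * lorentz_form t0 $ i $ j * sgnv {t,m} j"
        unfolding matrix_matrix_mult_def[of "transpose (Dm {t,m}) ** lorentz_form t0" "Dm {t,m}"]
        by (simp only: vec_lambda_beta a) (simp add: Dm_def if_distrib[where f="\<lambda>a. _ * a"] cong: if_cong)
      also have "\<dots> = lorentz_form t0 $ i $ j"
        by (cases "i = j") (auto simp: lorentz_form_def sgnv_def)
      finally show ?thesis .
    qed
    then show ?thesis by (simp add: vec_eq_iff)
  qed
  have "det (Dm {t,m}) = prod (\<lambda>i. sgnv {t,m} i) UNIV"
    by (subst det_diagonal) (auto simp: Dm_def)
  also have "\<dots> = 1"
  proof -
    have "prod (\<lambda>i. sgnv {t,m} i) UNIV = prod (\<lambda>i. sgnv {t,m} i) (UNIV - {t,m}) * prod (\<lambda>i. sgnv {t,m} i) {t,m}"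
      by (rule prod.subset_diff) auto
    also have "prod (\<lambda>i. sgnv {t,m} i) (UNIV - {t,m}) = 1"
      by (rule prod.neutral) (auto simp: sgnv_def)
    finally show ?thesis using assms by (simp add: sgnv_def)
  qed
  finally show ?thesis using 1 by (simp add: SO1n_def)
qed

lemma cact_Dm: fixes S :: "'n::finite set" shows "cact (Dm S) z = (\<chi> i. complex_of_real (sgnv S i) * z $ i)"
proof -
  have m: "(Dm S *v x) $ i = sgnv S i * x $ i" for x :: "real^'n" and i
    by (simp add: matrix_vector_mult_def Dm_def if_distrib[where f="\<lambda>a. a * _"] cong: if_cong)
  show ?thesis
    by (simp add: cact_def m vec_eq_iff complex_eq_iff)
qed

lemma cact_Dm_axis: fixes S :: "'n::finite set" shows "cact (Dm S) (axis j c) = sgnv S j *\<^sub>R axis j c"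
  by (auto simp: cact_Dm vec_eq_iff axis_def scaleR_conv_of_real[where 'a=complex])

theorem fact2p3:
  fixes b :: "complex^'n \<Rightarrow> complex^'n \<Rightarrow> complex^'n" and t0 :: "'n::finite"
  assumes "CARD('n) > 3"
    and "bilinear b"
    and "\<And>u v. b u v = - b v u"
    and "\<And>A u v. A \<in> SO1n t0 \<Longrightarrow> b (cact A u) (cact A v) = cact A (b u v)"
  shows "b = (\<lambda>u v. 0)"
proof -
  have key: "b (axis j c) (axis k d) $ i = 0" for i j k c d
  proof -
    have "card {i,j,k} \<le> 3" by (auto simp: card_insert_if)
    hence "{i,j,k} \<noteq> UNIV" using assms(1) by auto
    then obtain m where m: "m \<notin> {i,j,k}" by auto
    define t where "t = (if j = k then i else if i = j then k else if i = k then j else i)"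
    have tm: "t \<noteq> m" using m by (auto simp: t_def)
    have prod: "sgnv {t,m} k * sgnv {t,m} j = - sgnv {t,m} i"
      using m by (auto simp: t_def sgnv_def)
    let ?D = "Dm {t,m}"
    have "b (cact ?D (axis j c)) (cact ?D (axis k d)) = cact ?D (b (axis j c) (axis k d))"
      using assms(4)[OF Dm_SO[OF tm]] .
    hence E: "(sgnv {t,m} k * sgnv {t,m} j) *\<^sub>R b (axis j c) (axis k d) = cact ?D (b (axis j c) (axis k d))"
      by (simp add: cact_Dm_axis bilinear_lmul[OF assms(2)] bilinear_rmul[OF assms(2)])
    have "(sgnv {t,m} k * sgnv {t,m} j) *\<^sub>R b (axis j c) (axis k d) $ i = complex_of_real (sgnv {t,m} i) * b (axis j c) (axis k d) $ i"
      using E[THEN arg_cong[where f="\<lambda>v. v $ i"]] by (simp add: cact_Dm)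
    hence "- sgnv {t,m} i *\<^sub>R b (axis j c) (axis k d) $ i = complex_of_real (sgnv {t,m} i) * b (axis j c) (axis k d) $ i"
      by (simp only: prod)
    moreover have "sgnv {t,m} i \<noteq> 0" by (simp add: sgnv_def)
    ultimately show ?thesis by (simp add: scaleR_conv_of_real)
  qed
  have exp: "x = (\<Sum>j\<in>UNIV. axis j (x $ j))" for x :: "complex^'n"
    by (simp add: vec_eq_iff sum_component axis_def)
  show ?thesis
  proof (intro ext)
    fix u v
    have "b u v = b (\<Sum>j\<in>UNIV. axis j (u $ j)) (\<Sum>j\<in>UNIV. axis j (v $ j))"
      using exp by metis
    also have "\<dots> = (\<Sum>(j,k)\<in>UNIV \<times> UNIV. b (axis j (u $ j)) (axis k (v $ k)))"
      by (rule bilinear_sum[OF assms(2)])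
    also have "\<dots> = 0"
      by (rule sum.neutral) (auto simp: vec_eq_iff key)
    finally show "b u v = 0" .
  qed
qed

end
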